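(* Let $A$ be a commutative $\mathbb F_p$-algebra, $B=A[z_1,\ldots,z_n]$, $a_1,\ldots,a_n\in A$ a regular sequence in $A$, $\mathfrak a=Aa_1+\cdots+Aa_n$, and $\mathcal D:B^n\to B$ the $A$-linear map $\mathcal D(h_1,\ldots,h_n)=\sum_{i=1}^n(\partial_{z_i}h_i-a_ih_i)$. Let $f=\sum_r c_rz^r\in B$ with $c_r\in A$ (where $z^r=z_1^{r_1}\cdots z_n^{r_n}$). If $f^p\in\mathrm{Im}\,\mathcal D$, then $c_r^p\in\mathfrak a$ for all $r$.
   Context: $\partial_{z_i}$ denotes the formal partial derivative with respect to $z_i$ on $B$. *)

theory Defs
  imports Main "HOL-Library.Poly_Mapping" "HOL-Computational_Algebra.Primes"
begin

text \<open>Polynomials over a commutative ring 'a in variables z_0, z_1, ... are represented as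
  finitely supported maps from monomials (exponent vectors nat =>0 nat) to coefficients.
  A polynomial lies in B = A[z_0,...,z_{n-1}] iff all its monomials only involve variables < n.\<close>

type_synonym 'a mpoly = "(nat \<Rightarrow>\<^sub>0 nat) \<Rightarrow>\<^sub>0 'a"

definition in_vars :: "nat \<Rightarrow> ((nat \<Rightarrow>\<^sub>0 nat) \<Rightarrow>\<^sub>0 'a::zero) \<Rightarrow> bool" where
  "in_vars n f \<longleftrightarrow> (\<forall>m \<in> Poly_Mapping.keys f. Poly_Mapping.keys (m::nat \<Rightarrow>\<^sub>0 nat) \<subseteq> {..<n})"

definition const_mp :: "'a::zero \<Rightarrow> 'a mpoly" where
  "const_mp c = Poly_Mapping.single 0 c"

definition pdiff :: "nat \<Rightarrow> 'a::comm_ring_1 mpoly \<Rightarrow> 'a mpoly" where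
  "pdiff i h = (\<Sum>m\<in>Poly_Mapping.keys h. Poly_Mapping.single (m - Poly_Mapping.single i 1)
                                   (of_nat (Poly_Mapping.lookup m i) * Poly_Mapping.lookup h m))"

definition D_map :: "nat \<Rightarrow> (nat \<Rightarrow> 'a::comm_ring_1) \<Rightarrow> (nat \<Rightarrow> 'a mpoly) \<Rightarrow> 'a mpoly" where
  "D_map n a h = (\<Sum>i<n. pdiff i (h i) - const_mp (a i) * h i)"

definition gen_ideal :: "(nat \<Rightarrow> 'a::comm_ring_1) \<Rightarrow> nat \<Rightarrow> 'a set" where
  "gen_ideal a k = {x. \<exists>r. x = (\<Sum>j<k. r j * a j)}"

definition regular_seq :: "(nat \<Rightarrow> 'a::comm_ring_1) \<Rightarrow> nat \<Rightarrow> bool" where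
  "regular_seq a n \<longleftrightarrow>
     (\<forall>i<n. \<forall>x. x * a i \<in> gen_ideal a i \<longrightarrow> x \<in> gen_ideal a i) \<and> 1 \<notin> gen_ideal a n"

end

theory Submission
  imports Defs
begin

abbreviation G where "G \<equiv> gen_ideal"

lemma gen_zero: "0 \<in> G s k"
  unfolding gen_ideal_def by (rule CollectI, rule exI[of _ "\<lambda>_. 0"]) simp

lemma gen_add: "x \<in> G s k \<Longrightarrow> y \<in> G s k \<Longrightarrow> x + y \<in> G s k"
proof -
  assume "x \<in> G s k" "y \<in> G s k"
  then obtain r r' where "x = (\<Sum>j<k. r j * s j)" "y = (\<Sum>j<k. r' j * s j)"
    unfolding gen_ideal_def by blast
  then have "x + y = (\<Sum>j<k. (r j + r' j) * s j)" by (simp add: sum.distrib distrib_right)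
  then show ?thesis unfolding gen_ideal_def by (auto intro!: exI[of _ "\<lambda>j. r j + r' j"])
qed

lemma gen_mult: "x \<in> G s k \<Longrightarrow> c * x \<in> G s k"
proof -
  assume "x \<in> G s k"
  then obtain r where "x = (\<Sum>j<k. r j * s j)"
    unfolding gen_ideal_def by blast
  then have "c * x = (\<Sum>j<k. (c * r j) * s j)" by (simp add: sum_distrib_left mult.assoc)
  then show ?thesis unfolding gen_ideal_def by (auto intro!: exI[of _ "\<lambda>j. c * r j"])
qed

lemma gen_uminus: "x \<in> G s k \<Longrightarrow> - x \<in> G s k"
proof -
  assume "x \<in> G s k"
  from gen_mult[OF this, of "-1"] show ?thesis by simp
qed

lemma gen_diff: "x \<in> G s k \<Longrightarrow> y \<in> G s k \<Longrightarrow> x - y \<in> G s k"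
proof -
  assume "x \<in> G s k" "y \<in> G s k"
  from gen_add[OF this(1) gen_uminus[OF this(2)]] show ?thesis by simp
qed

lemma gen_gen: "j < k \<Longrightarrow> s j \<in> G s k"
  unfolding gen_ideal_def
proof (rule CollectI, rule exI[of _ "\<lambda>i. if i = j then 1 else 0"])
  assume "j < k"
  then show "s j = (\<Sum>i<k. (if i = j then 1 else 0) * s i)"
  proof -
    have "(\<Sum>i<k. (if i = j then 1 else 0) * s i) = (\<Sum>i<k. if i = j then s i else 0)"
      by (rule sum.cong) auto
    then show ?thesis using \<open>j < k\<close> by (simp add: sum.delta)
  qed
qed

lemma gen_gen_mult: "j < k \<Longrightarrow> c * s j \<in> G s k"
  by (rule gen_mult[OF gen_gen])

lemma gen_mult_right: "x \<in> G s k \<Longrightarrow> x * c \<in> G s k"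
  using gen_mult[of x s k c] by (simp add: mult.commute)

lemma gen_sum: "finite S \<Longrightarrow> (\<And>i. i \<in> S \<Longrightarrow> g i \<in> G s k) \<Longrightarrow> sum g S \<in> G s k"
  by (induction S rule: finite_induct) (auto intro: gen_zero gen_add)

lemma gen_subset: "(\<And>j. j < k \<Longrightarrow> t j \<in> G s k') \<Longrightarrow> x \<in> G t k \<Longrightarrow> x \<in> G s k'"
proof -
  assume a: "\<And>j. j < k \<Longrightarrow> t j \<in> G s k'" and "x \<in> G t k"
  then obtain r where x: "x = (\<Sum>j<k. r j * t j)" unfolding gen_ideal_def by blast
  show ?thesis unfolding x by (rule gen_sum) (simp_all add: a gen_mult)
qed

lemma gen_mono: "k \<le> k' \<Longrightarrow> x \<in> G s k \<Longrightarrow> x \<in> G s k'"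
proof -
  assume "k \<le> k'" "x \<in> G s k"
  then show ?thesis using gen_subset[of k s s k' x] gen_gen[of _ k' s] by simp
qed

lemma gen_cong: "(\<And>j. j < k \<Longrightarrow> s j = t j) \<Longrightarrow> G s k = G t k"
proof -
  assume a: "\<And>j. j < k \<Longrightarrow> s j = t j"
  have "(\<Sum>j<k. r j * s j) = (\<Sum>j<k. r j * t j)" for r by (rule sum.cong) (auto simp: a)
  then show ?thesis unfolding gen_ideal_def by auto
qed

lemma gen_times: "y \<in> G s k \<Longrightarrow> y * c \<in> G (\<lambda>l. s l * c) k"
  unfolding gen_ideal_def
  by (auto simp: sum_distrib_right mult.assoc)

definition reg :: "(nat \<Rightarrow> 'a::comm_ring_1) \<Rightarrow> nat \<Rightarrow> nat \<Rightarrow> bool" where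
  "reg s m k \<longleftrightarrow> (\<forall>i. m \<le> i \<longrightarrow> i < k \<longrightarrow> (\<forall>x. x * s i \<in> G s i \<longrightarrow> x \<in> G s i))"

lemma reg_mono: "reg s m k \<Longrightarrow> k' \<le> k \<Longrightarrow> reg s m k'"
  unfolding reg_def by auto

lemma koszul:
  assumes "reg s m k" "(\<Sum>j<k. \<xi> j * s j) \<in> G s m" "m \<le> j" "j < k"
  shows "\<xi> j \<in> G s k"
  using assms
proof (induction k arbitrary: \<xi> j)
  case 0
  then show ?case by simp
next
  case (Suc k)
  have mk: "m \<le> k" using Suc.prems by simp
  define \<sigma> where "\<sigma> = (\<Sum>j<k. \<xi> j * s j)"
  have s1: "\<sigma> \<in> G s k" unfolding \<sigma>_def gen_ideal_def by blast
  have tot: "\<sigma> + \<xi> k * s k \<in> G s k"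
    using gen_mono[OF mk Suc.prems(2)] by (simp add: \<sigma>_def)
  have "\<xi> k * s k \<in> G s k" using gen_diff[OF tot s1] by simp
  then have xk: "\<xi> k \<in> G s k" using Suc.prems(1) mk unfolding reg_def by auto
  then obtain \<eta> where eta: "\<xi> k = (\<Sum>j<k. \<eta> j * s j)" unfolding gen_ideal_def by blast
  define \<xi>' where "\<xi>' j = \<xi> j + \<eta> j * s k" for j
  have "(\<Sum>j<k. \<xi>' j * s j) = \<sigma> + (\<Sum>j<k. \<eta> j * s j) * s k"
    unfolding \<xi>'_def \<sigma>_def by (simp add: sum.distrib sum_distrib_right distrib_right distrib_left sum_distrib_left mult_ac)
  also have "\<dots> = (\<Sum>j<Suc k. \<xi> j * s j)" using eta by (simp add: \<sigma>_def)
  finally have "(\<Sum>j<k. \<xi>' j * s j) \<in> G s m" using Suc.prems(2) by simp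
  then have IH: "\<And>j. m \<le> j \<Longrightarrow> j < k \<Longrightarrow> \<xi>' j \<in> G s k"
    using Suc.IH[OF reg_mono[OF Suc.prems(1)]] by auto
  show ?case
  proof (cases "j = k")
    case True
    then show ?thesis using gen_mono[OF _ xk] by simp
  next
    case False
    then have "j < k" using Suc.prems by simp
    then have "\<xi>' j \<in> G s (Suc k)" using IH Suc.prems gen_mono[of k "Suc k"] by auto
    moreover have "\<eta> j * s k \<in> G s (Suc k)" by (rule gen_gen_mult) simp
    ultimately show ?thesis using gen_diff by (fastforce simp: \<xi>'_def)
  qed
qed

lemma nzd_pow:
  assumes "\<And>x. x * b \<in> G s i \<Longrightarrow> x \<in> G s i"
  shows "x * b ^ \<nu> \<in> G s i \<Longrightarrow> x \<in> G s i"
proof (induction \<nu> arbitrary: x)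
  case 0 then show ?case by simp
next
  case (Suc \<nu>)
  then have "(x * b ^ \<nu>) * b \<in> G s i" by (simp add: mult.assoc mult.commute mult.left_commute)
  then show ?case using assms Suc.IH by blast
qed

lemma power_lemma:
  assumes "reg s m k" "1 \<le> \<nu>"
  shows "reg (s(m := s m ^ \<nu>)) m k"
  using assms(2)
proof (induction \<nu>)
  case 0 then show ?case by simp
next
  case (Suc \<nu>)
  show ?case
  proof (cases "\<nu> = 0")
    case True
    then show ?thesis using assms(1) by simp
  next
    case False
    define s\<nu> where "s\<nu> = s(m := s m ^ \<nu>)"
    define s2 where "s2 = s(m := s m ^ Suc \<nu>)"
    have "1 \<le> \<nu>" using False by simp
    from Suc.IH[OF this] have IH: "reg s\<nu> m k" unfolding s\<nu>_def .
    show ?thesis unfolding s2_def[symmetric] reg_def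
    proof (intro allI impI)
      fix i x assume mi: "m \<le> i" and ik: "i < k" and xi: "x * s2 i \<in> G s2 i"
      show "x \<in> G s2 i"
      proof (cases "i = m")
        case True
        have "G s2 m = G s m" by (rule gen_cong) (simp add: s2_def)
        with xi True have "x * s m ^ Suc \<nu> \<in> G s m" by (simp add: s2_def)
        then have "x \<in> G s m"
          using nzd_pow[of "s m" s m x "Suc \<nu>"] assms(1) ik True unfolding reg_def by blast
        with True \<open>G s2 m = G s m\<close> show ?thesis by simp
      next
        case False
        then have mi': "m < i" using mi by simp
        have sub1: "G s2 i \<subseteq> G s\<nu> i"
        proof
          fix y assume "y \<in> G s2 i"
          then show "y \<in> G s\<nu> i"
          proof (rule gen_subset[rotated])
            fix j assume "j < i"
            show "s2 j \<in> G s\<nu> i"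
            proof (cases "j = m")
              case True
              have "s2 j = s m * s\<nu> m" by (simp add: s2_def s\<nu>_def True)
              then show ?thesis using gen_gen_mult[OF \<open>j < i\<close>, of "s m" s\<nu>] True by simp
            next
              case False
              then have "s2 j = s\<nu> j" by (simp add: s2_def s\<nu>_def)
              then show ?thesis using gen_gen[OF \<open>j < i\<close>] by simp
            qed
          qed
        qed
        have si: "s2 i = s i" "s\<nu> i = s i" using False by (simp_all add: s2_def s\<nu>_def)
        have "x * s\<nu> i \<in> G s\<nu> i" using xi sub1 si by auto
        then have "x \<in> G s\<nu> i" using IH mi ik unfolding reg_def by blast
        then obtain \<eta> where eta: "x = (\<Sum>j<i. \<eta> j * s\<nu> j)" unfolding gen_ideal_def by blast
        obtain y where y: "x * s i = (\<Sum>j<i. y j * s2 j)" using xi si unfolding gen_ideal_def by auto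
        define \<xi> where "\<xi> j = (if j = m then s i * \<eta> m - s m * y m else s i * \<eta> j - y j)" for j
        have pt: "\<xi> j * s\<nu> j = s i * (\<eta> j * s\<nu> j) - y j * s2 j" for j
          by (cases "j = m") (simp_all add: \<xi>_def s\<nu>_def s2_def algebra_simps)
        have "(\<Sum>j<i. \<xi> j * s\<nu> j) = s i * x - x * s i"
          unfolding pt sum_subtractf eta sum_distrib_left y[symmetric] by simp
        then have "(\<Sum>j<i. \<xi> j * s\<nu> j) \<in> G s\<nu> m" by (simp add: gen_zero)
        then have "\<xi> m \<in> G s\<nu> i"
          using koszul[OF reg_mono[OF IH] _ _ mi'] ik by auto
        moreover have sub2: "G s\<nu> i \<subseteq> G s i"
        proof
          fix z assume "z \<in> G s\<nu> i"
          then show "z \<in> G s i"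
          proof (rule gen_subset[rotated])
            fix j assume "j < i"
            show "s\<nu> j \<in> G s i"
            proof (cases "j = m")
              case True
              have "s\<nu> j = s m ^ (\<nu> - 1) * s m" using \<open>\<nu> \<noteq> 0\<close>
                by (simp add: s\<nu>_def True power_Suc2[symmetric])
              then show ?thesis using gen_gen_mult[OF \<open>j < i\<close>, of "s m ^ (\<nu> - 1)" s] True by simp
            next
              case False
              then have "s\<nu> j = s j" by (simp add: s\<nu>_def)
              then show ?thesis using gen_gen[OF \<open>j < i\<close>] by simp
            qed
          qed
        qed
        ultimately have "s i * \<eta> m - s m * y m \<in> G s i" by (auto simp: \<xi>_def)
        moreover have "s m * y m \<in> G s i" using gen_gen_mult[OF mi', of "y m" s] by (simp add: mult.commute)
        ultimately have "\<eta> m * s i \<in> G s i" using gen_add by (fastforce simp: mult.commute)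
        then have etam: "\<eta> m \<in> G s i" using assms(1) mi ik unfolding reg_def by blast
        have "\<eta> m * s m ^ \<nu> \<in> G (\<lambda>l. s l * s m ^ \<nu>) i" by (rule gen_times[OF etam])
        then have t1: "\<eta> m * s m ^ \<nu> \<in> G s2 i"
        proof (rule gen_subset[rotated])
          fix l assume "l < i"
          show "s l * s m ^ \<nu> \<in> G s2 i"
          proof (cases "l = m")
            case True
            then show ?thesis using gen_gen[OF \<open>l < i\<close>, of s2] by (simp add: s2_def)
          next
            case False
            then show ?thesis using gen_gen_mult[OF \<open>l < i\<close>, of "s m ^ \<nu>" s2]
              by (simp add: s2_def mult.commute)
          qed
        qed
        have "x \<in> G s2 i" unfolding eta
        proof (rule gen_sum)
          fix j assume "j \<in> {..<i}"
          then have "j < i" by simp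
          show "\<eta> j * s\<nu> j \<in> G s2 i"
          proof (cases "j = m")
            case True
            then show ?thesis using t1 by (simp add: s\<nu>_def)
          next
            case False
            then show ?thesis using gen_gen_mult[OF \<open>j < i\<close>, of "\<eta> j" s2] by (simp add: s2_def s\<nu>_def)
          qed
        qed simp
        then show ?thesis .
      qed
    qed
  qed
qed

lemma mixed_reg:
  assumes "reg a 0 n" "\<And>j. j < n \<Longrightarrow> 1 \<le> E j"
  shows "reg (\<lambda>j. a j ^ E j) 0 n"
proof -
  define S where "S m = (\<lambda>j. if m \<le> j then a j ^ E j else a j)" for m
  have "reg (S m) m n" if "m \<le> n" for m
    using that
  proof (induction m rule: inc_induct)
    case base
    then show ?case by (simp add: reg_def)
  next
    case (step m)
    define t where "t = S (Suc m)"
    have rt: "reg t m n" unfolding reg_def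
    proof (intro allI impI)
      fix i x assume "m \<le> i" "i < n" "x * t i \<in> G t i"
      show "x \<in> G t i"
      proof (cases "i = m")
        case True
        have eq: "G t m = G a m" by (rule gen_cong) (simp add: t_def S_def)
        have "t m = a m" by (simp add: t_def S_def)
        then show ?thesis using \<open>x * t i \<in> G t i\<close> assms(1) \<open>i < n\<close> True eq
          unfolding reg_def by auto
      next
        case False
        then show ?thesis using step.IH \<open>m \<le> i\<close> \<open>i < n\<close> \<open>x * t i \<in> G t i\<close>
          unfolding reg_def t_def by auto
      qed
    qed
    have "t(m := t m ^ E m) = S m"
      by (rule ext) (auto simp: t_def S_def)
    then show ?case using power_lemma[OF rt, of "E m"] assms(2) step.hyps by simp
  qed
  from this[of 0] show ?thesis by (simp add: S_def)
qed

lemma colon_step: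
  fixes a :: "nat \<Rightarrow> 'a::comm_ring_1"
  assumes reg: "reg a 0 n" and e: "2 \<le> e" and kn: "k < n"
    and t_def: "\<And>k. t k = (\<lambda>j. if j < k then a j ^ e else a j)"
    and hx: "x * a k ^ (e - 1) \<in> G (t (Suc k)) n"
  shows "x \<in> G (t k) n"
proof -
  define E where "E j = (if j < k then e else if j = k then e - 1 else 1)" for j
  define u where "u j = a j ^ E j" for j
  have ru: "reg u 0 n" unfolding u_def
    by (rule mixed_reg[OF reg]) (use e in \<open>auto simp: E_def\<close>)
  obtain y where y: "x * a k ^ (e - 1) = (\<Sum>j<n. y j * t (Suc k) j)"
    using hx unfolding gen_ideal_def by blast
  define \<xi> where "\<xi> j = (if j = k then x - a k * y k else - y j)" for j
  have ee: "a k * a k ^ (e - 1) = a k ^ e"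
  proof -
    obtain d where "e = Suc d" using e by (cases e) auto
    then show ?thesis by simp
  qed
  have pt: "\<xi> j * u j = (if j = k then x * a k ^ (e - 1) else 0) - y j * t (Suc k) j" for j
  proof (cases "j = k")
    case True
    have 1: "y k * a k ^ e = a k * (y k * a k ^ (e - 1))" unfolding ee[symmetric] by (simp only: mult_ac)
    have 2: "\<xi> j * u j = x * a k ^ (e - 1) - a k * (y k * a k ^ (e - 1))"
      using True unfolding \<xi>_def u_def E_def by (simp add: left_diff_distrib)
    have 3: "t (Suc k) j = a k ^ e" using True by (simp add: t_def)
    show ?thesis unfolding 2 3 using True by (simp only: if_True 1 simp_thms)
  next
    case False
    then show ?thesis by (cases "j < k") (simp_all add: \<xi>_def u_def E_def t_def)
  qed
  have "(\<Sum>j<n. \<xi> j * u j) = 0"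
  proof -
    have "(\<Sum>j<n. (if j = k then x * a k ^ (e - 1) else 0)) = x * a k ^ (e - 1)"
      using kn by (simp add: sum.delta)
    then show ?thesis unfolding pt sum_subtractf y[symmetric] by simp
  qed
  then have "(\<Sum>j<n. \<xi> j * u j) \<in> G u 0" by (simp add: gen_zero)
  from koszul[OF ru this, of k] kn have xk: "\<xi> k \<in> G u n" by simp
  have "\<xi> k \<in> G (t k) n"
  proof (rule gen_subset[OF _ xk])
    fix j assume jn: "j < n"
    show "u j \<in> G (t k) n"
    proof (cases "j = k")
      case True
      obtain d where d: "e = Suc (Suc d)" using e by (metis add_2_eq_Suc le_Suc_ex)
      have "u j = a k ^ (e - 2) * t k k" using True
        by (simp add: u_def E_def t_def d power_Suc2)
      then show ?thesis using gen_gen_mult[OF kn, of "a k ^ (e - 2)" "t k"] by simp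
    next
      case False
      then have "u j = t k j" by (cases "j < k") (simp_all add: u_def E_def t_def)
      then show ?thesis using gen_gen[OF jn] by simp
    qed
  qed
  moreover have "a k * y k \<in> G (t k) n"
    using gen_gen_mult[OF kn, of "y k" "t k"] by (simp add: t_def mult.commute)
  ultimately have "\<xi> k + a k * y k \<in> G (t k) n" by (rule gen_add)
  then show ?thesis by (simp add: \<xi>_def)
qed

lemma CA:
  fixes a :: "nat \<Rightarrow> 'a::comm_ring_1"
  assumes reg: "reg a 0 n" and e: "2 \<le> e"
    and h: "c * (\<Prod>j<n. a j ^ (e - 1)) \<in> G (\<lambda>j. a j ^ e) n"
  shows "c \<in> G a n"
proof -
  define t where "t k = (\<lambda>j. if j < k then a j ^ e else a j)" for k
  have main: "\<forall>c. c * (\<Prod>j<k. a j ^ (e - 1)) \<in> G (t k) n \<longrightarrow> c \<in> G a n" if "k \<le> n" for k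
    using that
  proof (induction k)
    case 0
    have "t 0 = a" by (simp add: t_def)
    then show ?case by simp
  next
    case (Suc k)
    show ?case
    proof (intro allI impI)
      fix c assume hc: "c * (\<Prod>j<Suc k. a j ^ (e - 1)) \<in> G (t (Suc k)) n"
      have "(c * (\<Prod>j<k. a j ^ (e - 1))) * a k ^ (e - 1) \<in> G (t (Suc k)) n"
        using hc by (simp add: mult.assoc)
      from colon_step[OF reg e _ t_def this] Suc.prems
      have "c * (\<Prod>j<k. a j ^ (e - 1)) \<in> G (t k) n" by simp
      then show "c \<in> G a n" using Suc.IH Suc.prems by simp
    qed
  qed
  have "G (t n) n = G (\<lambda>j. a j ^ e) n" by (rule gen_cong) (simp add: t_def)
  then show ?thesis using main[of n] h by simp
qed

lemma of_nat_dvd_zero: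
  assumes "of_nat p = (0::'b::comm_semiring_1)" "p dvd m"
  shows "of_nat m = (0::'b)"
proof -
  obtain q where "m = p * q" using assms(2) by blast
  then show ?thesis using assms(1) by simp
qed

lemma frob_add:
  fixes x y :: "'b::comm_ring_1"
  assumes p: "prime p" and c: "of_nat p = (0::'b)"
  shows "(x + y) ^ p = x ^ p + y ^ p"
proof -
  have p0: "p \<noteq> 0" using p by auto
  have t: "of_nat (p choose k) * x ^ k * y ^ (p - k) =
           (if k = p then x ^ p else 0) + (if k = 0 then y ^ p else 0)" if "k \<le> p" for k
  proof (cases "k = 0 \<or> k = p")
    case True
    then show ?thesis using p0 by auto
  next
    case False
    then have "p dvd (p choose k)" using dvd_choose_prime[of k p] that p p0 by auto
    then have "of_nat (p choose k) = (0::'b)" by (rule of_nat_dvd_zero[OF c])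
    then show ?thesis using False by simp
  qed
  have "(x + y) ^ p = (\<Sum>k\<le>p. of_nat (p choose k) * x ^ k * y ^ (p - k))"
    by (rule binomial_ring)
  also have "\<dots> = (\<Sum>k\<le>p. (if k = p then x ^ p else 0) + (if k = 0 then y ^ p else 0))"
    by (rule sum.cong) (simp_all add: t)
  also have "\<dots> = x ^ p + y ^ p" by (simp add: sum.distrib sum.delta)
  finally show ?thesis .
qed

lemma frob_sum:
  fixes g :: "'c \<Rightarrow> 'b::comm_ring_1"
  assumes p: "prime p" and c: "of_nat p = (0::'b)" and S: "finite S"
  shows "(\<Sum>s\<in>S. g s) ^ p = (\<Sum>s\<in>S. g s ^ p)"
  using S
proof (induction S rule: finite_induct)
  case empty
  then show ?case using p by (simp add: prime_gt_0_nat zero_power)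
next
  case (insert s S)
  then show ?case by (simp add: frob_add[OF p c])
qed

lemma mpoly_char:
  assumes "of_nat p = (0::'a::comm_ring_1)"
  shows "of_nat p = (0::'a mpoly)"
  by (metis assms single_of_nat single_zero)

definition Lam :: "((nat \<Rightarrow>\<^sub>0 nat) \<Rightarrow> 'a) \<Rightarrow> 'a mpoly \<Rightarrow> 'a::comm_ring_1" where
  "Lam w F = (\<Sum>k\<in>Poly_Mapping.keys F. Poly_Mapping.lookup F k * w k)"

lemma Lam_superset:
  assumes "finite S" "Poly_Mapping.keys F \<subseteq> S"
  shows "Lam w F = (\<Sum>k\<in>S. Poly_Mapping.lookup F k * w k)"
  unfolding Lam_def
  by (rule sum.mono_neutral_left) (use assms in \<open>auto simp: in_keys_iff\<close>)

lemma Lam_add: "Lam w (P + Q) = Lam w P + Lam w Q"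
proof -
  let ?S = "Poly_Mapping.keys P \<union> Poly_Mapping.keys Q"
  have "Lam w (P + Q) = (\<Sum>k\<in>?S. Poly_Mapping.lookup (P + Q) k * w k)"
    by (rule Lam_superset) (use keys_add[of P Q] in auto)
  also have "\<dots> = (\<Sum>k\<in>?S. Poly_Mapping.lookup P k * w k) + (\<Sum>k\<in>?S. Poly_Mapping.lookup Q k * w k)"
    by (simp add: lookup_add distrib_right sum.distrib)
  also have "\<dots> = Lam w P + Lam w Q"
    by (subst (1 2) Lam_superset[of ?S]) auto
  finally show ?thesis .
qed

lemma Lam_diff: "Lam w (P - Q) = Lam w P - Lam w Q"
proof -
  let ?S = "Poly_Mapping.keys P \<union> Poly_Mapping.keys Q"
  have "Lam w (P - Q) = (\<Sum>k\<in>?S. Poly_Mapping.lookup (P - Q) k * w k)"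
    by (rule Lam_superset) (use keys_diff[of P Q] in auto)
  also have "\<dots> = (\<Sum>k\<in>?S. Poly_Mapping.lookup P k * w k) - (\<Sum>k\<in>?S. Poly_Mapping.lookup Q k * w k)"
    by (simp add: lookup_minus left_diff_distrib sum_subtractf)
  also have "\<dots> = Lam w P - Lam w Q"
    by (subst (1 2) Lam_superset[of ?S]) auto
  finally show ?thesis .
qed

lemma Lam_zero: "Lam w 0 = 0"
  by (simp add: Lam_def)

lemma Lam_sum: "finite S \<Longrightarrow> Lam w (\<Sum>s\<in>S. g s) = (\<Sum>s\<in>S. Lam w (g s))"
  by (induction S rule: finite_induct) (simp_all add: Lam_zero Lam_add)

lemma Lam_single: "Lam w (Poly_Mapping.single k c) = c * w k"
  by (simp add: Lam_def)

lemma mpoly_decomp: "F = (\<Sum>k\<in>Poly_Mapping.keys F. Poly_Mapping.single k (Poly_Mapping.lookup F k))"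
proof (rule poly_mapping_eqI)
  fix m
  show "Poly_Mapping.lookup F m = Poly_Mapping.lookup (\<Sum>k\<in>Poly_Mapping.keys F. Poly_Mapping.single k (Poly_Mapping.lookup F k)) m"
    by (auto simp: lookup_sum lookup_single when_def in_keys_iff sum.delta)
qed

lemma single_pow:
  "\<exists>K. Poly_Mapping.single k c ^ m = Poly_Mapping.single K (c ^ m) \<and>
       (\<forall>j. Poly_Mapping.lookup K j = m * Poly_Mapping.lookup k j)"
proof (induction m)
  case 0
  show ?case by (rule exI[of _ 0]) simp
next
  case (Suc m)
  then obtain K where K: "Poly_Mapping.single k c ^ m = Poly_Mapping.single K (c ^ m)"
    "\<forall>j. Poly_Mapping.lookup K j = m * Poly_Mapping.lookup k j" by blast
  show ?case
    by (rule exI[of _ "k + K"]) (simp add: K mult_single lookup_add)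
qed

lemma Lam_const_mult: "Lam w (const_mp c * H) = (\<Sum>m\<in>Poly_Mapping.keys H. c * Poly_Mapping.lookup H m * w m)"
proof -
  have "const_mp c * H = (\<Sum>m\<in>Poly_Mapping.keys H. Poly_Mapping.single m (c * Poly_Mapping.lookup H m))"
    by (subst mpoly_decomp[of H]) (simp add: const_mp_def sum_distrib_left mult_single)
  then show ?thesis by (simp add: Lam_sum Lam_single)
qed

lemma Lam_pdiff: "Lam w (pdiff i H) = (\<Sum>m\<in>Poly_Mapping.keys H.
     of_nat (Poly_Mapping.lookup m i) * Poly_Mapping.lookup H m * w (m - Poly_Mapping.single i 1))"
  by (simp add: pdiff_def Lam_sum Lam_single)

abbreviation L where "L \<equiv> Poly_Mapping.lookup"

definition Fw :: "nat \<Rightarrow> (nat \<Rightarrow> 'a::comm_ring_1) \<Rightarrow> (nat \<Rightarrow>\<^sub>0 nat) \<Rightarrow> nat \<Rightarrow> 'a" where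
  "Fw p a m j = of_nat (fact (L m j mod p) :: nat) * a j ^ (p - 1 - L m j mod p)"

definition wt :: "nat \<Rightarrow> nat \<Rightarrow> (nat \<Rightarrow> 'a::comm_ring_1) \<Rightarrow> (nat \<Rightarrow>\<^sub>0 nat) \<Rightarrow> (nat \<Rightarrow>\<^sub>0 nat) \<Rightarrow> 'a" where
  "wt p n a r m = (if (\<forall>j. L m j div p = L r j) then (\<Prod>j<n. Fw p a m j) else 0)"

lemma div_mod_pred:
  fixes x p :: nat
  assumes "x mod p \<noteq> 0"
  shows "(x - 1) div p = x div p \<and> (x - 1) mod p = x mod p - 1"
proof (cases "p = 0")
  case True then show ?thesis by simp
next
  case False
  define q where "q = x div p"
  define s where "s = x mod p"
  have x0: "x = s + q * p" unfolding q_def s_def by simp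
  have "s \<noteq> 0" using assms s_def by simp
  then have x: "x - 1 = (s - 1) + q * p" using x0 by linarith
  have sp: "s - 1 < p" using False s_def by (simp add: less_imp_diff_less)
  have "(x - 1) div p = q" unfolding x using sp False by simp
  moreover have "(x - 1) mod p = s - 1" unfolding x using sp False by simp
  ultimately show ?thesis by (simp add: q_def s_def)
qed

lemma prod_split:
  fixes n :: nat
  assumes "i < n"
  shows "(\<Prod>j<n. g j) = g i * (\<Prod>j\<in>{..<n} - {i}. g j)"
  by (rule prod.remove) (use assms in auto)

lemma termwise:
  fixes a :: "nat \<Rightarrow> 'a::comm_ring_1"
  assumes p: "prime p" and c: "of_nat p = (0::'a)" and i: "i < n"
  shows "of_nat (L m i) * wt p n a r (m - Poly_Mapping.single i 1) - a i * wt p n a r m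
         \<in> G (\<lambda>j. a j ^ p) n"
proof -
  have p0: "0 < p" using p by (simp add: prime_gt_0_nat)
  define m' where "m' = m - Poly_Mapping.single i 1"
  have Lm': "L m' j = (if j = i then L m i - 1 else L m j)" for j
    by (simp add: m'_def lookup_minus lookup_single when_def)
  show ?thesis
  proof (cases "L m i mod p = 0")
    case True
    have z: "of_nat (L m i) = (0::'a)"
      by (rule of_nat_dvd_zero[OF c]) (use True in \<open>simp add: dvd_eq_mod_eq_0\<close>)
    have "a i * wt p n a r m \<in> G (\<lambda>j. a j ^ p) n"
    proof (cases "\<forall>j. L m j div p = L r j")
      case True
      have F: "Fw p a m i = a i ^ (p - 1)" using \<open>L m i mod p = 0\<close> by (simp add: Fw_def)
      have pp: "a i * a i ^ (p - 1) = a i ^ p" using p0 by (cases p) simp_all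
      have "a i * wt p n a r m = (\<Prod>j\<in>{..<n} - {i}. Fw p a m j) * a i ^ p"
        using True by (simp add: wt_def prod_split[OF i] F pp[symmetric] mult_ac)
      then show ?thesis using gen_gen_mult[OF i, of "\<Prod>j\<in>{..<n} - {i}. Fw p a m j" "\<lambda>j. a j ^ p"] by simp
    next
      case False
      have "wt p n a r m = 0" unfolding wt_def using False by (simp only: if_False)
      then show ?thesis by (simp add: gen_zero)
    qed
    then show ?thesis using z gen_uminus unfolding m'_def[symmetric] by fastforce
  next
    case False
    define s where "s = L m i mod p"
    have s0: "s \<noteq> 0" using False s_def by simp
    have sp: "s < p" using p0 s_def by simp
    have dm: "(L m i - 1) div p = L m i div p" "(L m i - 1) mod p = s - 1"
      using div_mod_pred[OF False] s_def by auto
    have blk: "(\<forall>j. L m' j div p = L r j) \<longleftrightarrow> (\<forall>j. L m j div p = L r j)"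
      using dm(1) by (auto simp: Lm' split: if_splits)
    have ofn: "of_nat (L m i) = (of_nat s :: 'a)"
    proof -
      have "L m i = s + (L m i div p) * p" by (simp add: s_def)
      then have "(of_nat (L m i) :: 'a) = of_nat s + of_nat (L m i div p) * of_nat p"
        by (metis of_nat_add of_nat_mult)
      then show ?thesis using c by simp
    qed
    show ?thesis
    proof (cases "\<forall>j. L m j div p = L r j")
      case True
      have rest: "(\<Prod>j\<in>{..<n} - {i}. Fw p a m' j) = (\<Prod>j\<in>{..<n} - {i}. Fw p a m j)"
        by (rule prod.cong) (auto simp: Fw_def Lm')
      have Fi': "Fw p a m' i = of_nat (fact (s - 1)) * a i ^ (p - s)"
        using dm(2) sp s0 by (simp add: Fw_def Lm')
      have Fi: "Fw p a m i = of_nat (fact s) * a i ^ (p - 1 - s)"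
        by (simp add: Fw_def s_def)
      have fs: "(of_nat (fact s) :: 'a) = of_nat s * of_nat (fact (s - 1))"
      proof -
        have "fact s = s * fact (s - 1)" using fact_reduce[of s, where 'a=nat] s0 unfolding of_nat_id by simp
        then show ?thesis by (simp only: of_nat_mult)
      qed
      have ps: "a i ^ (p - s) = a i * a i ^ (p - 1 - s)"
      proof -
        have "p - s = Suc (p - 1 - s)" using sp by simp
        then show ?thesis by (simp only: power_Suc)
      qed
      have key: "of_nat s * Fw p a m' i = a i * Fw p a m i"
        unfolding Fi Fi' fs ps by (simp only: mult_ac)
      have w1: "wt p n a r m' = Fw p a m' i * (\<Prod>j\<in>{..<n} - {i}. Fw p a m j)"
        using True blk unfolding wt_def rest[symmetric] by (simp only: if_True prod_split[OF i] simp_thms)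
      have w2: "wt p n a r m = Fw p a m i * (\<Prod>j\<in>{..<n} - {i}. Fw p a m j)"
        using True unfolding wt_def by (simp only: if_True prod_split[OF i] simp_thms)
      have "of_nat (L m i) * wt p n a r m' - a i * wt p n a r m = 0"
        unfolding w1 w2 ofn mult.assoc[symmetric] key by simp
      then show ?thesis by (simp add: m'_def gen_zero)
    next
      case False
      have w0: "wt p n a r m = 0" unfolding wt_def using False by (simp only: if_False)
      have w0': "wt p n a r m' = 0" unfolding wt_def using False blk by (simp only: if_False)
      show ?thesis unfolding m'_def[symmetric] w0 w0' by (simp add: gen_zero)
    qed
  qed
qed

lemma Lam_D:
  fixes a :: "nat \<Rightarrow> 'a::comm_ring_1"
  assumes p: "prime p" and c: "of_nat p = (0::'a)"
  shows "Lam (wt p n a r) (D_map n a h) \<in> G (\<lambda>j. a j ^ p) n"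
proof -
  have "Lam (wt p n a r) (D_map n a h) =
        (\<Sum>i<n. Lam (wt p n a r) (pdiff i (h i)) - Lam (wt p n a r) (const_mp (a i) * h i))"
    by (simp add: D_map_def Lam_sum Lam_diff)
  also have "\<dots> = (\<Sum>i<n. \<Sum>m\<in>Poly_Mapping.keys (h i). L (h i) m *
        (of_nat (L m i) * wt p n a r (m - Poly_Mapping.single i 1) - a i * wt p n a r m))"
    unfolding Lam_pdiff Lam_const_mult sum_subtractf[symmetric]
    by (rule sum.cong, simp, rule sum.cong, simp) (simp add: algebra_simps)
  also have "\<dots> \<in> G (\<lambda>j. a j ^ p) n"
    by (intro gen_sum gen_mult termwise[OF p c]) auto
  finally show ?thesis .
qed

lemma Lam_frob:
  fixes a :: "nat \<Rightarrow> 'a::comm_ring_1"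
  assumes p: "prime p" and c: "of_nat p = (0::'a)"
  shows "Lam (wt p n a r) (f ^ p) = L f r ^ p * (\<Prod>j<n. a j ^ (p - 1))"
proof -
  have p0: "0 < p" using p by (simp add: prime_gt_0_nat)
  define P where "P = (\<Prod>j<n. a j ^ (p - 1))"
  have cm: "of_nat p = (0::'a mpoly)" by (rule mpoly_char[OF c])
  have "f ^ p = (\<Sum>k\<in>Poly_Mapping.keys f. Poly_Mapping.single k (L f k)) ^ p"
    by (subst mpoly_decomp[of f]) simp
  also have "\<dots> = (\<Sum>k\<in>Poly_Mapping.keys f. Poly_Mapping.single k (L f k) ^ p)"
    by (rule frob_sum[OF p cm]) simp
  finally have fp: "f ^ p = (\<Sum>k\<in>Poly_Mapping.keys f. Poly_Mapping.single k (L f k) ^ p)" .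
  have one: "Lam (wt p n a r) (Poly_Mapping.single k cc ^ p) = (if k = r then cc ^ p * P else 0)" for k cc
  proof -
    obtain K where K: "Poly_Mapping.single k cc ^ p = Poly_Mapping.single K (cc ^ p)"
      "\<forall>j. L K j = p * L k j" using single_pow by blast
    have blk: "(\<forall>j. L K j div p = L r j) \<longleftrightarrow> k = r"
      using K(2) p0 by (auto intro: poly_mapping_eqI)
    have "Fw p a K j = a j ^ (p - 1)" for j using K(2) by (simp add: Fw_def)
    then have "wt p n a r K = (if k = r then P else 0)"
      unfolding wt_def blk P_def by simp
    then show ?thesis unfolding K(1) Lam_single by simp
  qed
  have "Lam (wt p n a r) (f ^ p) = (\<Sum>k\<in>Poly_Mapping.keys f. if k = r then L f k ^ p * P else 0)"
    unfolding fp by (simp add: Lam_sum one)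
  also have "\<dots> = L f r ^ p * P"
    using p0 by (simp add: sum.delta in_keys_iff zero_power)
  finally show ?thesis unfolding P_def .
qed

theorem corollary2p6:
  fixes p n :: nat and a :: "nat \<Rightarrow> 'a::comm_ring_1" and f :: "'a mpoly"
  assumes "prime p"
    and "of_nat p = (0::'a)"
    and "regular_seq a n"
    and "in_vars n f"
    and "\<exists>h. (\<forall>i<n. in_vars n (h i)) \<and> f ^ p = D_map n a h"
  shows "\<forall>r. (Poly_Mapping.lookup f r) ^ p \<in> gen_ideal a n"
proof
  fix r
  obtain h where h: "f ^ p = D_map n a h" using assms(5) by blast
  have "L f r ^ p * (\<Prod>j<n. a j ^ (p - 1)) \<in> G (\<lambda>j. a j ^ p) n"
    using Lam_D[OF assms(1,2), of n a r h] Lam_frob[OF assms(1,2), of n a r f] h by simp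
  moreover have "reg a 0 n" using assms(3) unfolding regular_seq_def reg_def by blast
  moreover have "2 \<le> p" using assms(1) by (simp add: prime_ge_2_nat)
  ultimately show "L f r ^ p \<in> gen_ideal a n" using CA by blast
qed

end
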